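(* Let $\Omega\subset\mathbb{R}^n$ be a domain, $-\infty<a<b<\infty$, and $p:\Omega\times[a,b]\to\mathbb{R}$ such that $p(\cdot,t)\in C^1(\Omega)$ for every $t\in[a,b]$ and $\nabla p$ is continuous on $\Omega\times[a,b]$. Let $U\subset\Omega$ be a subdomain with $|U|<\infty$ and $1<q<\infty$ such that $(p-p_U)|_U\in L^\infty(a,b;L^q(U))$, where $p_U(t)=|U|^{-1}\int_Up(x,t)\,dx$. Then $(x,t)\mapsto p(x,t)-p_U(t)$ is continuous on $\Omega\times[a,b]$.
   Context: A domain is an open connected subset of $\mathbb{R}^n$; $\nabla p$ denotes the spatial gradient; $|U|$ the Lebesgue measure of $U$. *)

theory Defs
  imports "HOL-Analysis.Analysis"
begin

definition domain :: "'a::euclidean_space set \<Rightarrow> bool" where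
  "domain \<Omega> \<longleftrightarrow> open \<Omega> \<and> connected \<Omega> \<and> \<Omega> \<noteq> {}"

definition mean_over :: "'a::euclidean_space set \<Rightarrow> ('a \<Rightarrow> real) \<Rightarrow> real" where
  "mean_over U g = (\<integral>x\<in>U. g x \<partial>lebesgue) / measure lebesgue U"

definition Lq_on :: "real \<Rightarrow> 'a::euclidean_space set \<Rightarrow> ('a \<Rightarrow> real) \<Rightarrow> bool" where
  "Lq_on q U g \<longleftrightarrow> g \<in> borel_measurable (lebesgue_on U)
      \<and> integrable (lebesgue_on U) (\<lambda>x. \<bar>g x\<bar> powr q)"

definition simple_Lq_valued ::
  "real \<Rightarrow> real \<Rightarrow> 'a::euclidean_space set \<Rightarrow> real \<Rightarrow> (real \<Rightarrow> 'a \<Rightarrow> real) \<Rightarrow> bool" where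
  "simple_Lq_valued a b U q s \<longleftrightarrow>
     (\<exists>I::nat set. \<exists>A g. finite I \<and>
        (\<forall>i\<in>I. A i \<in> sets lebesgue \<and> A i \<subseteq> {a..b} \<and> Lq_on q U (g i)) \<and>
        (\<forall>t x. s t x = (\<Sum>i\<in>I. indicator (A i) t * g i x)))"

text \<open>Bochner space L^\<infinity>(a,b;L^q(U)): strongly measurable (a.e. limit of simple
  functions in L^q(U)-norm), values a.e. in L^q(U), essentially bounded norm.\<close>
definition Linf_Lq ::
  "real \<Rightarrow> real \<Rightarrow> 'a::euclidean_space set \<Rightarrow> real \<Rightarrow> (real \<Rightarrow> 'a \<Rightarrow> real) \<Rightarrow> bool" where
  "Linf_Lq a b U q f \<longleftrightarrow>
     (AE t in lebesgue_on {a..b}. Lq_on q U (f t)) \<and>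
     (\<exists>s. (\<forall>k. simple_Lq_valued a b U q (s k)) \<and>
        (AE t in lebesgue_on {a..b}.
           (\<lambda>k. \<integral>x. \<bar>s k t x - f t x\<bar> powr q \<partial>lebesgue_on U) \<longlonglongrightarrow> 0)) \<and>
     (\<exists>C. AE t in lebesgue_on {a..b}. (\<integral>x. \<bar>f t x\<bar> powr q \<partial>lebesgue_on U) \<le> C)"

end

theory Submission
  imports Defs
begin

lemma mvt_inner:
  fixes g :: "'a::euclidean_space \<Rightarrow> real"
  assumes "convex S" "\<And>z. z \<in> S \<Longrightarrow> (g has_derivative (\<lambda>h. G z \<bullet> h)) (at z)"
    "\<And>z. z \<in> S \<Longrightarrow> norm (G z) \<le> B" "x \<in> S" "y \<in> S"
  shows "\<bar>g x - g y\<bar> \<le> B * norm (x - y)"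
proof -
  have "norm (g x - g y) \<le> B * norm (x - y)"
  proof (rule differentiable_bound[OF assms(1) _ _ assms(4,5)])
    fix z assume z: "z \<in> S"
    show "(g has_derivative (\<lambda>h. G z \<bullet> h)) (at z within S)"
      using assms(2)[OF z] by (rule has_derivative_at_withinI)
    show "onorm (\<lambda>h. G z \<bullet> h) \<le> B"
    proof (rule onorm_le)
      fix h show "norm (G z \<bullet> h) \<le> B * norm h"
        using Cauchy_Schwarz_ineq2[of "G z" h] assms(3)[OF z]
        by (simp add: mult_right_mono order_trans)
    qed
  qed
  then show ?thesis by simp
qed

lemma lebIcc: "(u::real) \<le> v \<Longrightarrow> emeasure lebesgue {u..v} = ennreal (v - u)"
  by (simp add: emeasure_lborel_Icc emeasure_completion)

lemma local_cont:
  fixes p :: "'a::euclidean_space \<Rightarrow> real \<Rightarrow> real" and Dp :: "'a \<Rightarrow> real \<Rightarrow> 'a"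
  assumes deriv: "\<forall>t\<in>{a..b}. \<forall>x\<in>\<Omega>. ((\<lambda>y. p y t) has_derivative (\<lambda>h. Dp x t \<bullet> h)) (at x)"
    and cont: "continuous_on (\<Omega> \<times> {a..b}) (\<lambda>(x, t). Dp x t)"
    and sub: "cball x r \<subseteq> \<Omega>" and y: "y \<in> cball x r"
  shows "continuous_on {a..b} (\<lambda>t. p y t - p x t)"
  unfolding continuous_on_iff
proof (intro ballI allI impI)
  fix t e :: real assume t: "t \<in> {a..b}" and e: "0 < e"
  have r: "r \<ge> 0" using y by (auto simp: dist_norm) (smt (verit) norm_ge_zero)
  have "compact (cball x r \<times> {a..b})" by (simp add: compact_Times)
  moreover have "continuous_on (cball x r \<times> {a..b}) (\<lambda>(x, t). Dp x t)"
    using cont by (rule continuous_on_subset) (use sub in auto)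
  ultimately have uc: "uniformly_continuous_on (cball x r \<times> {a..b}) (\<lambda>(x, t). Dp x t)"
    by (rule compact_uniformly_continuous[rotated])
  define e' where "e' = e / (r + 1)"
  have e': "e' > 0" using e r by (simp add: e'_def)
  obtain d where d: "d > 0" and dd: "\<And>u v. u \<in> cball x r \<times> {a..b} \<Longrightarrow> v \<in> cball x r \<times> {a..b}
      \<Longrightarrow> dist v u < d \<Longrightarrow> dist ((\<lambda>(x, t). Dp x t) v) ((\<lambda>(x, t). Dp x t) u) < e'"
    using uc e' unfolding uniformly_continuous_on_def by metis
  show "\<exists>d>0. \<forall>t'\<in>{a..b}. dist t' t < d \<longrightarrow> dist (p y t' - p x t') (p y t - p x t) < e"
  proof (intro exI[of _ d] conjI ballI impI d)
    fix t' assume t': "t' \<in> {a..b}" and dt: "dist t' t < d"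
    have "\<bar>(p y t' - p y t) - (p x t' - p x t)\<bar> \<le> e' * norm (y - x)"
    proof (rule mvt_inner[where g = "\<lambda>z. p z t' - p z t" and G = "\<lambda>z. Dp z t' - Dp z t"])
      show "convex (cball x r)" by simp
      show "y \<in> cball x r" by fact
      show "x \<in> cball x r" using r by simp
      fix z assume z: "z \<in> cball x r"
      show "((\<lambda>z. p z t' - p z t) has_derivative (\<lambda>h. (Dp z t' - Dp z t) \<bullet> h)) (at z)"
        using has_derivative_diff[OF deriv[rule_format, OF t' ] deriv[rule_format, OF t]] z sub
        by (auto simp: inner_diff_left)
      have "dist (z, t') (z, t) < d" using dt by (simp add: dist_Pair_Pair)
      then have "dist (Dp z t') (Dp z t) < e'" using dd[of "(z,t)" "(z,t')"] z t t' by auto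
      then show "norm (Dp z t' - Dp z t) \<le> e'" by (simp add: dist_norm)
    qed
    also have "\<dots> \<le> e' * r" using y e' by (simp add: dist_norm norm_minus_commute)
    also have "\<dots> < e" using e r by (simp add: e'_def field_simps)
    finally show "dist (p y t' - p x t') (p y t - p x t) < e"
      by (simp add: dist_real_def algebra_simps)
  qed
qed

lemma joint_cont:
  fixes p :: "'a::euclidean_space \<Rightarrow> real \<Rightarrow> real" and Dp :: "'a \<Rightarrow> real \<Rightarrow> 'a"
  assumes deriv: "\<forall>t\<in>{a..b}. \<forall>x\<in>\<Omega>. ((\<lambda>y. p y t) has_derivative (\<lambda>h. Dp x t \<bullet> h)) (at x)"
    and cont: "continuous_on (\<Omega> \<times> {a..b}) (\<lambda>(x, t). Dp x t)"
    and op: "open \<Omega>" and co: "connected \<Omega>" and x0: "x0 \<in> \<Omega>"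
  shows "continuous_on (\<Omega> \<times> {a..b}) (\<lambda>(x, t). p x t - p x0 t)"
proof -
  have R: "continuous_on {a..b} (\<lambda>t. p y t - p x0 t)" if y: "y \<in> \<Omega>" for y
  proof (rule connected_equivalence_relation[OF co x0 y,
        where R = "\<lambda>x y. continuous_on {a..b} (\<lambda>t. p y t - p x t)"])
    fix x y assume "continuous_on {a..b} (\<lambda>t. p y t - p x t)"
    then have "continuous_on {a..b} (\<lambda>t. - (p y t - p x t))" by (rule continuous_on_minus)
    then show "continuous_on {a..b} (\<lambda>t. p x t - p y t)" by simp
  next
    fix x y z assume "continuous_on {a..b} (\<lambda>t. p y t - p x t)" "continuous_on {a..b} (\<lambda>t. p z t - p y t)"
    then have "continuous_on {a..b} (\<lambda>t. (p z t - p y t) + (p y t - p x t))"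
      by (intro continuous_on_add)
    then show "continuous_on {a..b} (\<lambda>t. p z t - p x t)" by simp
  next
    fix c assume c: "c \<in> \<Omega>"
    obtain r where r: "r > 0" "cball c r \<subseteq> \<Omega>" using op c open_contains_cball by blast
    show "\<exists>T. openin (top_of_set \<Omega>) T \<and> c \<in> T \<and> (\<forall>x\<in>T. continuous_on {a..b} (\<lambda>t. p x t - p c t))"
    proof (intro exI[of _ "ball c r"] conjI ballI)
      show "openin (top_of_set \<Omega>) (ball c r)"
        using r by (intro open_subset) auto
      show "c \<in> ball c r" using r by simp
      fix x assume "x \<in> ball c r"
      then show "continuous_on {a..b} (\<lambda>t. p x t - p c t)"
        by (intro local_cont[OF deriv cont r(2)]) auto
    qed
  qed
  show ?thesis
    unfolding continuous_on_iff
  proof (intro ballI allI impI)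
    fix z e assume z: "z \<in> \<Omega> \<times> {a..b}" and e: "(0::real) < e"
    obtain y s where zys: "z = (y, s)" by fastforce
    have y: "y \<in> \<Omega>" and s: "s \<in> {a..b}" using z zys by auto
    obtain r where r: "r > 0" "cball y r \<subseteq> \<Omega>" using op y open_contains_cball by blast
    have "compact ((\<lambda>(x, t). Dp x t) ` (cball y r \<times> {a..b}))"
      by (rule compact_continuous_image) (use cont r in \<open>auto intro: continuous_on_subset simp: compact_Times\<close>)
    then obtain B where B: "B > 0" "\<And>w. w \<in> (\<lambda>(x, t). Dp x t) ` (cball y r \<times> {a..b}) \<Longrightarrow> norm w \<le> B"
      using compact_imp_bounded bounded_pos by metis
    obtain d1 where d1: "d1 > 0" "\<And>t. t \<in> {a..b} \<Longrightarrow> dist t s < d1 \<Longrightarrow>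
        dist (p y t - p x0 t) (p y s - p x0 s) < e/2"
      using R[OF y] s e unfolding continuous_on_iff by (metis half_gt_zero)
    define d where "d = min (min r d1) (e / (2*B))"
    have d: "d > 0" using r d1 B e by (simp add: d_def)
    show "\<exists>d>0. \<forall>z'\<in>\<Omega> \<times> {a..b}. dist z' z < d \<longrightarrow>
        dist ((\<lambda>(x, t). p x t - p x0 t) z') ((\<lambda>(x, t). p x t - p x0 t) z) < e"
    proof (intro exI[of _ d] conjI ballI impI d)
      fix z' assume z': "z' \<in> \<Omega> \<times> {a..b}" and dz: "dist z' z < d"
      obtain x t where zxt: "z' = (x, t)" by fastforce
      have t: "t \<in> {a..b}" using z' zxt by auto
      have dxy: "dist x y < d" and dts: "dist t s < d"
        using dz zxt zys by (auto simp: dist_Pair_Pair intro: le_less_trans[OF real_sqrt_sum_squares_ge1]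
            le_less_trans[OF real_sqrt_sum_squares_ge2])
      have xin: "x \<in> cball y r" using dxy by (simp add: d_def dist_commute)
      have "\<bar>p x t - p y t\<bar> \<le> B * norm (x - y)"
      proof (rule mvt_inner[where G = "\<lambda>z. Dp z t"])
        show "convex (cball y r)" by simp
        show "x \<in> cball y r" by fact
        show "y \<in> cball y r" using r by simp
        fix w assume w: "w \<in> cball y r"
        show "((\<lambda>y. p y t) has_derivative (\<lambda>h. Dp w t \<bullet> h)) (at w)"
          using deriv t w r by auto
        show "norm (Dp w t) \<le> B" using B(2)[of "Dp w t"] w t by force
      qed
      also have "\<dots> < B * d" using dxy B by (simp add: dist_norm)
      also have "\<dots> \<le> e/2" using B e by (simp add: d_def field_simps min_def)
      finally have 1: "\<bar>p x t - p y t\<bar> < e/2" .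
      have 2: "dist (p y t - p x0 t) (p y s - p x0 s) < e/2"
        using d1(2)[OF t] dts by (simp add: d_def)
      show "dist ((\<lambda>(x, t). p x t - p x0 t) z') ((\<lambda>(x, t). p x t - p x0 t) z) < e"
        using 1 2 zxt zys unfolding dist_real_def by simp (smt (verit))
    qed
  qed
qed


lemma pw_bound:
  fixes y l q :: real
  assumes "y \<ge> 0" "l > 0" "q > 1"
  shows "y \<le> l + y powr q / l powr (q - 1)"
proof (cases "y \<le> l")
  case True then show ?thesis using assms by (simp add: add_increasing2)
next
  case False
  then have yl: "y > l" by simp
  have "y * l powr (q - 1) \<le> y * y powr (q - 1)"
    using yl assms by (intro mult_left_mono powr_mono2) auto
  also have "\<dots> = y powr q" using yl assms by (simp add: powr_mult_base)
  finally have "y \<le> y powr q / l powr (q - 1)" using assms by (simp add: field_simps)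
  then show ?thesis using assms by linarith
qed

lemma open_sets_lebesgue: "open (S :: 'a::euclidean_space set) \<Longrightarrow> S \<in> sets lebesgue"
  by simp

lemma closed_sets_lebesgue: "closed (S :: 'a::euclidean_space set) \<Longrightarrow> S \<in> sets lebesgue"
  by simp

lemma measure_pos_open:
  fixes U :: "'a::euclidean_space set"
  assumes "open U" "U \<noteq> {}" "emeasure lebesgue U < \<infinity>"
  shows "measure lebesgue U > 0"
proof -
  obtain x r where r: "r > 0" "ball x r \<subseteq> U" using assms open_contains_ball by blast
  have "emeasure lebesgue (ball x r) \<le> emeasure lebesgue U"
    using r assms by (intro emeasure_mono) auto
  moreover have "emeasure lebesgue (ball x r) > 0" using r
    by simp (metis Sigma_Algebra.measure_def content_ball_gt_0_iff enn2real_0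
    not_gr_zero order_less_imp_not_eq2)
  ultimately have "emeasure lebesgue U > 0" by simp
  then show ?thesis using assms(3) unfolding measure_def
    by (simp add: enn2real_positive_iff)
qed



lemma core:
  fixes U :: "'a::euclidean_space set" and D :: "'a \<Rightarrow> real \<Rightarrow> real" and c :: "real \<Rightarrow> real"
    and Cn :: "nat \<Rightarrow> 'a set"
  assumes U: "open U" and fin: "emeasure lebesgue U < \<infinity>" and mu: "measure lebesgue U > 0"
    and Cc: "\<And>n. compact (Cn n)" and Cs: "\<And>n. Cn n \<subseteq> U" and Cm: "\<And>n. Cn n \<subseteq> Cn (Suc n)"
    and Cu: "\<Union>(range Cn) = U"
    and Dc: "continuous_on (U \<times> {a..b}) (\<lambda>(x,t). D x t)"
    and Dint: "\<And>t. t\<in>{a..b} \<Longrightarrow> integrable (lebesgue_on U) (\<lambda>x. D x t)"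
    and cdef: "\<And>t. c t = (LINT x|lebesgue_on U. D x t) / measure lebesgue U"
    and q: "1 < q"
    and t: "t \<in> {a..b}" and e: "\<epsilon> > 0"
  shows "\<exists>\<delta>>0. \<forall>s\<in>{a..b}. \<bar>s - t\<bar> < \<delta> \<longrightarrow>
     integrable (lebesgue_on U) (\<lambda>x. \<bar>D x s - c s\<bar> powr q) \<longrightarrow>
     (LINT x|lebesgue_on U. \<bar>D x s - c s\<bar> powr q) \<le> C \<longrightarrow> \<bar>c s - c t\<bar> \<le> \<epsilon>"
proof -
  define M where "M = lebesgue_on U"
  define \<mu> where "\<mu> = measure lebesgue U"
  have Us: "U \<in> sets lebesgue" using U by simp
  have spM: "space M = U" by (simp add: M_def)
  have finM: "finite_measure M"
    unfolding M_def using fin Us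
    by (intro finite_measureI) (simp add: emeasure_restrict_space)
  have mM: "measure M U = \<mu>" unfolding M_def \<mu>_def using Us by (simp add: measure_restrict_space)
  have intc: "integrable M (\<lambda>x. k)" for k :: real
    using finM by (simp add: finite_measure.integrable_const)
  have Ic: "(LINT x|M. k) = \<mu> * k" for k :: real
    using mM spM by simp
  have DintM: "integrable M (\<lambda>x. D x s)" if "s \<in> {a..b}" for s
    using Dint[OF that] by (simp add: M_def)
  have ID: "(LINT x|M. D x s) = \<mu> * c s" for s
    using cdef[of s] mu by (simp add: M_def \<mu>_def)
  define A where "A n = U - Cn n" for n
  have AM: "A n \<in> sets M" for n
  proof -
    have "closed (Cn n)" using Cc compact_imp_closed by blast
    then have "U - Cn n \<in> sets lebesgue" using U by (intro sets.Diff) auto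
    then show ?thesis unfolding A_def M_def using Us
      by (simp add: sets_restrict_space_iff)
  qed
  have lim: "(\<lambda>n. LINT x|M. indicator (A n) x * h x) \<longlonglongrightarrow> 0" if hi: "integrable M h" for h :: "'a \<Rightarrow> real"
  proof -
    have "(\<lambda>n. LINT x|M. indicator (A n) x * h x) \<longlonglongrightarrow> (LINT x|M. 0)"
    proof (rule integral_dominated_convergence[where w = "\<lambda>x. \<bar>h x\<bar>"])
      show "(\<lambda>x. 0::real) \<in> borel_measurable M" by simp
      show "(\<lambda>x. indicator (A n) x * h x) \<in> borel_measurable M" for n
        using AM hi by (intro borel_measurable_times borel_measurable_indicator) auto
      show "integrable M (\<lambda>x. \<bar>h x\<bar>)" using hi by simp
      show "AE x in M. norm (indicator (A n) x * h x) \<le> \<bar>h x\<bar>" for n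
        by (auto simp: indicator_def)
      show "AE x in M. (\<lambda>n. indicator (A n) x * h x) \<longlonglongrightarrow> 0"
      proof (rule AE_I2)
        fix x assume "x \<in> space M"
        then obtain N where N: "x \<in> Cn N" using Cu spM by auto
        have "x \<in> Cn n" if "n \<ge> N" for n
          using lift_Suc_mono_le[of Cn, OF Cm that] N by auto
        then have "eventually (\<lambda>n. indicator (A n) x * h x = 0) sequentially"
          unfolding eventually_sequentially by (auto simp: A_def indicator_def)
        then show "(\<lambda>n. indicator (A n) x * h x) \<longlonglongrightarrow> 0" by (rule tendsto_eventually)
      qed
    qed
    then show ?thesis by simp
  qed
  have mu': "\<mu> > 0" using mu by (simp add: \<mu>_def)
  define C' where "C' = max C 0"
  define lam where "lam = (8 * C' / (\<epsilon> * \<mu>) + 1) powr (1 / (q - 1))"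
  have C'0: "C' \<ge> 0" by (simp add: C'_def)
  have base: "8 * C' / (\<epsilon> * \<mu>) + 1 > 0" using C'0 e mu' by (simp add: add_nonneg_pos)
  have lam0: "lam > 0" using base by (simp add: lam_def)
  have lamq: "lam powr (q - 1) = 8 * C' / (\<epsilon> * \<mu>) + 1"
    using base q by (simp add: lam_def powr_powr)
  have lamb: "C / lam powr (q - 1) \<le> \<epsilon> * \<mu> / 8"
  proof -
    have "C / lam powr (q - 1) \<le> C' / lam powr (q - 1)"
      using lamq base by (intro divide_right_mono) (auto simp: C'_def)
    also have "\<dots> \<le> \<epsilon> * \<mu> / 8"
    proof -
      have Lp: "lam powr (q - 1) > 0" using lam0 by simp
      have "\<epsilon> * \<mu> * lam powr (q - 1) = 8 * C' + \<epsilon> * \<mu>" using lamq e mu' by (simp add: field_simps)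
      then show ?thesis using Lp e mu' by (simp add: pos_divide_le_eq)
    qed
    finally show ?thesis .
  qed
  define ft where "ft x = \<bar>D x t - c t\<bar>" for x
  have ftint: "integrable M ft" unfolding ft_def using DintM[OF t] intc by auto
  have ev1: "eventually (\<lambda>n. (LINT x|M. indicator (A n) x * ft x) < \<epsilon> * \<mu> / 8) sequentially"
    using lim[OF ftint] e mu' by (intro order_tendstoD(2)) auto
  have ev2: "eventually (\<lambda>n. (LINT x|M. indicator (A n) x * 1) < min (\<mu> / 2) (\<epsilon> * \<mu> / (8 * lam))) sequentially"
    using lim[OF intc[of 1]] e mu' lam0 by (intro order_tendstoD(2)) auto
  obtain N where N1: "(LINT x|M. indicator (A N) x * ft x) < \<epsilon> * \<mu> / 8"
    and N2: "(LINT x|M. indicator (A N) x * 1) < min (\<mu> / 2) (\<epsilon> * \<mu> / (8 * lam))"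
    using eventually_conj[OF ev1 ev2] unfolding eventually_sequentially by auto
  have "compact (Cn N \<times> {a..b})" using Cc by (simp add: compact_Times)
  moreover have "continuous_on (Cn N \<times> {a..b}) (\<lambda>(x, t). D x t)"
    using Dc by (rule continuous_on_subset) (use Cs in auto)
  ultimately have uc: "uniformly_continuous_on (Cn N \<times> {a..b}) (\<lambda>(x, t). D x t)"
    by (rule compact_uniformly_continuous[rotated])
  have e8: "\<epsilon> / 8 > 0" using e by simp
  obtain \<delta> where \<delta>: "\<delta> > 0" and dd: "\<And>u v. u \<in> Cn N \<times> {a..b} \<Longrightarrow> v \<in> Cn N \<times> {a..b}
      \<Longrightarrow> dist v u < \<delta> \<Longrightarrow> dist ((\<lambda>(x, t). D x t) v) ((\<lambda>(x, t). D x t) u) < \<epsilon> / 8"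
    using uc e8 unfolding uniformly_continuous_on_def by metis
  show ?thesis
  proof (intro exI[of _ \<delta>] conjI ballI impI \<delta>)
    fix s assume s: "s \<in> {a..b}" and st: "\<bar>s - t\<bar> < \<delta>"
      and fsi: "integrable (lebesgue_on U) (\<lambda>x. \<bar>D x s - c s\<bar> powr q)"
      and fsC: "(LINT x|lebesgue_on U. \<bar>D x s - c s\<bar> powr q) \<le> C"
    define fs where "fs x = \<bar>D x s - c s\<bar>" for x
    define d where "d = c s - c t"
    define I where "I x = (indicator (A N) x :: real)" for x
    define L where "L = lam powr (q - 1)"
    have L0: "L > 0" using lam0 by (simp add: L_def)
    have fsi': "integrable M (\<lambda>x. fs x powr q)" using fsi by (simp add: fs_def M_def)
    have fsC': "(LINT x|M. fs x powr q) \<le> C" using fsC by (simp add: fs_def M_def)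
    have gi: "integrable M (\<lambda>x. D x s - D x t)" using DintM[OF s] DintM[OF t] by auto
    have eq: "(LINT x|M. D x s - D x t) = \<mu> * d"
      using DintM[OF s] DintM[OF t] ID[of s] ID[of t] by (simp add: d_def algebra_simps)
    have Ii1: "integrable M (\<lambda>x. I x * k)" for k
      using integrable_mult_indicator[OF AM intc[of k]] by (simp add: I_def)
    have Ii2: "integrable M (\<lambda>x. I x * ft x)"
      using integrable_mult_indicator[OF AM ftint] by (simp add: I_def)
    have Ii3: "integrable M (\<lambda>x. fs x powr q / L)" using fsi' by simp
    let ?R = "\<lambda>x. \<epsilon> / 8 + I x * (\<bar>d\<bar> + lam) + fs x powr q / L + I x * ft x"
    have Ri: "integrable M ?R" using intc Ii1 Ii2 Ii3 by auto
    have pw: "\<bar>D x s - D x t\<bar> \<le> ?R x" if x: "x \<in> space M" for x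
    proof (cases "x \<in> Cn N")
      case True
      then have "I x = 0" by (simp add: I_def A_def)
      moreover have "dist (D x s) (D x t) < \<epsilon> / 8"
        using dd[of "(x,t)" "(x,s)"] True s t st by (simp add: dist_Pair_Pair dist_real_def)
      moreover have "fs x powr q / L \<ge> 0" using L0 by simp
      ultimately show ?thesis by (simp add: dist_real_def)
    next
      case False
      then have I1: "I x = 1" using x spM by (simp add: I_def A_def)
      have "fs x \<le> lam + fs x powr q / L" unfolding L_def
        using pw_bound[of "fs x" lam q] lam0 q by (simp add: fs_def)
      moreover have "\<bar>D x s - D x t\<bar> \<le> fs x + ft x + \<bar>d\<bar>"
        by (simp add: fs_def ft_def d_def)
      ultimately show ?thesis using I1 e by simp
    qed
    have "\<bar>\<mu> * d\<bar> \<le> (LINT x|M. ?R x)"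
      using integral_abs_bound_integral[OF gi Ri pw] eq by simp
    also have "(LINT x|M. ?R x) = \<mu> * (\<epsilon> / 8) + (LINT x|M. I x * 1) * (\<bar>d\<bar> + lam)
        + (LINT x|M. fs x powr q) / L + (LINT x|M. I x * ft x)"
    proof -
      have "(LINT x|M. ?R x) = (LINT x|M. \<epsilon> / 8) + (LINT x|M. I x * (\<bar>d\<bar> + lam))
        + (LINT x|M. fs x powr q / L) + (LINT x|M. I x * ft x)"
        using intc Ii1 Ii2 Ii3 by simp
      moreover have "(LINT x|M. I x * (\<bar>d\<bar> + lam)) = (LINT x|M. I x * 1) * (\<bar>d\<bar> + lam)"
        by simp
      ultimately show ?thesis using Ic by simp
    qed
    finally have main: "\<mu> * \<bar>d\<bar> \<le> \<mu> * (\<epsilon> / 8) + (LINT x|M. I x * 1) * (\<bar>d\<bar> + lam)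
        + (LINT x|M. fs x powr q) / L + (LINT x|M. I x * ft x)"
      using mu' by (simp add: abs_mult)
    define m where "m = (LINT x|M. I x * 1)"
    have m0: "m \<ge> 0" unfolding m_def by (rule Bochner_Integration.integral_nonneg) (simp add: I_def)
    have m1: "m < \<mu> / 2" and m2: "m < \<epsilon> * \<mu> / (8 * lam)" using N2 by (auto simp: m_def I_def)
    have "m * lam < \<epsilon> * \<mu> / 8" using m2 lam0 by (simp add: field_simps)
    moreover have "m * \<bar>d\<bar> \<le> \<mu> / 2 * \<bar>d\<bar>" using m1 by (intro mult_right_mono) auto
    moreover have "(LINT x|M. fs x powr q) / L \<le> \<epsilon> * \<mu> / 8"
      using divide_right_mono[OF fsC', of L] L0 lamb unfolding L_def by (meson less_imp_le order_trans)
    moreover have "(LINT x|M. I x * ft x) < \<epsilon> * \<mu> / 8" using N1 by (simp add: I_def)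
    ultimately have "\<mu> * \<bar>d\<bar> \<le> \<mu> * \<epsilon>"
      using main unfolding m_def[symmetric] by (simp add: algebra_simps)
    then show "\<bar>c s - c t\<bar> \<le> \<epsilon>" using mu' by (simp add: d_def)
  qed
qed


lemma cont_c:
  fixes U :: "'a::euclidean_space set" and D :: "'a \<Rightarrow> real \<Rightarrow> real" and c :: "real \<Rightarrow> real"
    and Cn :: "nat \<Rightarrow> 'a set"
  assumes U: "open U" and fin: "emeasure lebesgue U < \<infinity>" and mu: "measure lebesgue U > 0"
    and Cc: "\<And>n. compact (Cn n)" and Cs: "\<And>n. Cn n \<subseteq> U" and Cm: "\<And>n. Cn n \<subseteq> Cn (Suc n)"
    and Cu: "\<Union>(range Cn) = U"
    and Dc: "continuous_on (U \<times> {a..b}) (\<lambda>(x,t). D x t)"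
    and Dint: "\<And>t. t\<in>{a..b} \<Longrightarrow> integrable (lebesgue_on U) (\<lambda>x. D x t)"
    and cdef: "\<And>t. c t = (LINT x|lebesgue_on U. D x t) / measure lebesgue U"
    and q: "1 < q"
    and dens: "\<And>t \<delta>. t \<in> {a..b} \<Longrightarrow> \<delta> > 0 \<Longrightarrow> \<exists>s\<in>{a..b}. \<bar>s - t\<bar> < \<delta> \<and>
        integrable (lebesgue_on U) (\<lambda>x. \<bar>D x s - c s\<bar> powr q) \<and>
        (LINT x|lebesgue_on U. \<bar>D x s - c s\<bar> powr q) \<le> C"
  shows "continuous_on {a..b} c"
  unfolding continuous_on_iff
proof (intro ballI allI impI)
  fix t e :: real assume t: "t \<in> {a..b}" and e: "e > 0"
  have cr: "\<exists>\<delta>>0. \<forall>s\<in>{a..b}. \<bar>s - t0\<bar> < \<delta> \<longrightarrow>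
     integrable (lebesgue_on U) (\<lambda>x. \<bar>D x s - c s\<bar> powr q) \<longrightarrow>
     (LINT x|lebesgue_on U. \<bar>D x s - c s\<bar> powr q) \<le> C \<longrightarrow> \<bar>c s - c t0\<bar> \<le> \<epsilon>"
    if "t0 \<in> {a..b}" "\<epsilon> > 0" for t0 \<epsilon>
    by (rule core[where D = D and c = c and Cn = Cn and U = U])
      (use U fin mu Cc Cs Cm Cu Dc Dint cdef q that in auto)
  obtain \<delta> where \<delta>: "\<delta> > 0" and H: "\<forall>s\<in>{a..b}. \<bar>s - t\<bar> < \<delta> \<longrightarrow>
     integrable (lebesgue_on U) (\<lambda>x. \<bar>D x s - c s\<bar> powr q) \<longrightarrow>
     (LINT x|lebesgue_on U. \<bar>D x s - c s\<bar> powr q) \<le> C \<longrightarrow> \<bar>c s - c t\<bar> \<le> e/3"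
    using cr[OF t, of "e/3"] e by auto
  show "\<exists>d>0. \<forall>t'\<in>{a..b}. dist t' t < d \<longrightarrow> dist (c t') (c t) < e"
  proof (intro exI[of _ "\<delta>/2"] conjI ballI impI)
    show "\<delta>/2 > 0" using \<delta> by simp
    fix t' assume t': "t' \<in> {a..b}" and dt: "dist t' t < \<delta>/2"
    obtain \<delta>' where \<delta>': "\<delta>' > 0" and H': "\<forall>s\<in>{a..b}. \<bar>s - t'\<bar> < \<delta>' \<longrightarrow>
       integrable (lebesgue_on U) (\<lambda>x. \<bar>D x s - c s\<bar> powr q) \<longrightarrow>
       (LINT x|lebesgue_on U. \<bar>D x s - c s\<bar> powr q) \<le> C \<longrightarrow> \<bar>c s - c t'\<bar> \<le> e/3"
      using cr[OF t', of "e/3"] e by auto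
    obtain s where s: "s \<in> {a..b}" "\<bar>s - t'\<bar> < min (\<delta>/2) \<delta>'"
      and g1: "integrable (lebesgue_on U) (\<lambda>x. \<bar>D x s - c s\<bar> powr q)"
      and g2: "(LINT x|lebesgue_on U. \<bar>D x s - c s\<bar> powr q) \<le> C"
      using dens[OF t', of "min (\<delta>/2) \<delta>'"] \<delta> \<delta>' by auto
    have "\<bar>s - t\<bar> < \<delta>" using s dt unfolding dist_real_def by simp (smt (verit))
    then have 1: "\<bar>c s - c t\<bar> \<le> e/3" using H s g1 g2 by auto
    have 2: "\<bar>c s - c t'\<bar> \<le> e/3" using H' s g1 g2 by auto
    show "dist (c t') (c t) < e" using 1 2 e unfolding dist_real_def by linarith
  qed
qed

lemma dens_AE:
  fixes a b :: real
  assumes ab: "a < b" and AE: "AE s in lebesgue_on {a..b}. P s" and t: "t \<in> {a..b}" and d: "\<delta> > 0"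
  shows "\<exists>s\<in>{a..b}. \<bar>s - t\<bar> < \<delta> \<and> P s"
proof (rule ccontr)
  assume nP: "\<not> ?thesis"
  define u where "u = max a (t - \<delta>/2)"
  define v where "v = min b (t + \<delta>/2)"
  have uv: "u < v" using ab t d by (auto simp: u_def v_def)
  have Isub: "{u..v} \<subseteq> {a..b}" by (auto simp: u_def v_def)
  have "\<forall>s\<in>{u..v}. \<not> P s"
  proof
    fix s assume s: "s \<in> {u..v}"
    then have "s \<in> {a..b}" "\<bar>s - t\<bar> < \<delta>" using Isub d by (auto simp: u_def v_def)
    then show "\<not> P s" using nP by auto
  qed
  then have "AE s in lebesgue_on {a..b}. s \<notin> {u..v}" using AE by (rule_tac AE_mp[OF AE]) auto
  moreover have Is: "{u..v} \<in> sets (lebesgue_on {a..b})"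
    using Isub by (auto simp: sets_restrict_space_iff)
  ultimately have "{u..v} \<in> null_sets (lebesgue_on {a..b})" by (simp add: AE_iff_null_sets)
  then have "emeasure (lebesgue_on {a..b}) {u..v} = 0" by auto
  moreover have "emeasure (lebesgue_on {a..b}) {u..v} = emeasure lebesgue {u..v}"
    using Isub by (simp add: emeasure_restrict_space)
  moreover have "emeasure lebesgue {u..v} = ennreal (v - u)" using uv by (simp add: lebIcc)
  ultimately show False using uv by simp
qed

theorem lemmaB2:
  fixes \<Omega> U :: "'a::euclidean_space set"
    and p :: "'a \<Rightarrow> real \<Rightarrow> real"
    and Dp :: "'a \<Rightarrow> real \<Rightarrow> 'a"
    and a b q :: real
  assumes "domain \<Omega>"
    and "a < b"
    and "\<forall>t\<in>{a..b}. \<forall>x\<in>\<Omega>. ((\<lambda>y. p y t) has_derivative (\<lambda>h. Dp x t \<bullet> h)) (at x)"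
    and "continuous_on (\<Omega> \<times> {a..b}) (\<lambda>(x, t). Dp x t)"
    and "domain U" and "U \<subseteq> \<Omega>"
    and "emeasure lebesgue U < \<infinity>"
    and "1 < q"
    and "\<forall>t\<in>{a..b}. set_integrable lebesgue U (\<lambda>x. p x t)"
    and "Linf_Lq a b U q (\<lambda>t x. p x t - mean_over U (\<lambda>y. p y t))"
  shows "continuous_on (\<Omega> \<times> {a..b}) (\<lambda>(x, t). p x t - mean_over U (\<lambda>y. p y t))"
proof -
  note deriv = assms(3) and contDp = assms(4) and fin = assms(7) and q = assms(8)
  have opO: "open \<Omega>" and coO: "connected \<Omega>" using assms(1) by (auto simp: domain_def)
  have opU: "open U" and neU: "U \<noteq> {}" using assms(5) by (auto simp: domain_def)
  obtain x0 where x0: "x0 \<in> U" using neU by blast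
  have x0O: "x0 \<in> \<Omega>" using x0 assms(6) by auto
  define D where "D x t = p x t - p x0 t" for x t
  have jc: "continuous_on (\<Omega> \<times> {a..b}) (\<lambda>(x, t). D x t)"
    unfolding D_def by (rule joint_cont[OF deriv contDp opO coO x0O])
  have DcU: "continuous_on (U \<times> {a..b}) (\<lambda>(x, t). D x t)"
    using jc by (rule continuous_on_subset) (use assms(6) in auto)
  have Us: "U \<in> sets lebesgue" using opU by simp
  define \<mu> where "\<mu> = measure lebesgue U"
  have mu: "\<mu> > 0" unfolding \<mu>_def by (rule measure_pos_open[OF opU neU fin])
  have finM: "finite_measure (lebesgue_on U)"
    using fin Us by (intro finite_measureI) (simp add: emeasure_restrict_space)
  have mM: "measure (lebesgue_on U) U = \<mu>" unfolding \<mu>_def using Us by (simp add: measure_restrict_space)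
  have pint: "integrable (lebesgue_on U) (\<lambda>x. p x t)" if t: "t \<in> {a..b}" for t
    using assms(9) t Us by (simp add: set_integrable_def integrable_restrict_space)
  have intc: "integrable (lebesgue_on U) (\<lambda>x. k)" for k :: real
    using finM by (simp add: finite_measure.integrable_const)
  have Dint: "integrable (lebesgue_on U) (\<lambda>x. D x t)" if t: "t \<in> {a..b}" for t
    unfolding D_def using pint[OF t] intc by auto
  define c where "c t = (LINT x|lebesgue_on U. D x t) / \<mu>" for t
  have mean: "mean_over U (\<lambda>y. p y t) = c t + p x0 t" if t: "t \<in> {a..b}" for t
  proof -
    have "(\<integral>x\<in>U. p x t \<partial>lebesgue) = (LINT x|lebesgue_on U. p x t)"
      using Us by (simp add: set_lebesgue_integral_def integral_restrict_space)
    also have "\<dots> = (LINT x|lebesgue_on U. D x t) + \<mu> * p x0 t"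
      using pint[OF t] intc mM by (simp add: D_def)
    finally show ?thesis using mu by (simp add: mean_over_def c_def \<mu>_def[symmetric] field_simps)
  qed
  have fe: "p x t - mean_over U (\<lambda>y. p y t) = D x t - c t" if t: "t \<in> {a..b}" for x t
    using mean[OF t] by (simp add: D_def)
  obtain C where AE1: "AE t in lebesgue_on {a..b}. Lq_on q U (\<lambda>x. p x t - mean_over U (\<lambda>y. p y t))"
    and AE2: "AE t in lebesgue_on {a..b}. (\<integral>x. \<bar>p x t - mean_over U (\<lambda>y. p y t)\<bar> powr q \<partial>lebesgue_on U) \<le> C"
    using assms(10) unfolding Linf_Lq_def by blast
  have AE3: "AE t in lebesgue_on {a..b}. t \<in> {a..b}"
    by (rule AE_I2) simp
  have AEg: "AE s in lebesgue_on {a..b}. integrable (lebesgue_on U) (\<lambda>x. \<bar>D x s - c s\<bar> powr q) \<and>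
        (LINT x|lebesgue_on U. \<bar>D x s - c s\<bar> powr q) \<le> C"
    using AE1 AE2 AE3 by eventually_elim (simp add: fe Lq_on_def)
  obtain Cn where Cc: "\<And>n. compact (Cn n)" and Cs: "\<And>n. Cn n \<subseteq> U"
    and Ci: "\<And>n. Cn n \<subseteq> interior (Cn (Suc n))" and Cu: "\<Union>(range Cn) = U"
    using open_Union_compact_subsets[OF opU] by metis
  have Cm: "\<And>n. Cn n \<subseteq> Cn (Suc n)" using Ci interior_subset by blast
  have contc: "continuous_on {a..b} c"
  proof (rule cont_c[OF opU fin _ Cc Cs Cm Cu DcU Dint _ q, where C = C])
    show "measure lebesgue U > 0" using mu by (simp add: \<mu>_def)
    show "c t = (LINT x|lebesgue_on U. D x t) / measure lebesgue U" for t by (simp add: c_def \<mu>_def)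
    fix t \<delta> :: real assume "t \<in> {a..b}" "\<delta> > 0"
    then show "\<exists>s\<in>{a..b}. \<bar>s - t\<bar> < \<delta> \<and>
        integrable (lebesgue_on U) (\<lambda>x. \<bar>D x s - c s\<bar> powr q) \<and>
        (LINT x|lebesgue_on U. \<bar>D x s - c s\<bar> powr q) \<le> C"
      using dens_AE[OF assms(2) AEg] by blast
  qed
  have "continuous_on (\<Omega> \<times> {a..b}) (\<lambda>z. (\<lambda>(x, t). D x t) z - c (snd z))"
    by (intro continuous_on_diff jc continuous_on_compose2[OF contc] continuous_on_snd) auto
  then show ?thesis
    by (rule continuous_on_cong[THEN iffD1, rotated 2]) (auto simp: fe)
qed
end
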